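(* Let $X$ be a topological space, $\sigma : X\to X$ a homeomorphism, and $\widetilde{\sigma}(f) = f\circ\sigma^{-1}$ the induced automorphism of $C(X)$. Let $A$ be a non-zero subalgebra of $C(X)$ invariant under $\widetilde{\sigma}$ and $\widetilde{\sigma}^{-1}$, which separates the points of $X$ and is such that every non-empty open set $U\subseteq X$ is a domain of uniqueness for $A$. Then $A$ is maximal abelian in $A\rtimes_{\widetilde{\sigma}}\mathbb{Z}$ if and only if $\sigma$ is not of finite order (i.e. $\sigma^n\neq \mathrm{id}_X$ for every non-zero integer $n$).
   Context: A non-empty subset $S\subseteq X$ is a domain of uniqueness for $A$ if every function in $A$ vanishing on $S$ vanishes on all of $X$. The crossed product $A \rtimes_{\widetilde{\sigma}} \mathbb{Z}$ is the set of finitely supported functions $\mathbb{Z}\to A$, written $\sum_n f_n\delta^n$, with pointwise linear operations and multiplication determined by $(f_n\delta^n)*(g_m\delta^m)=f_n\,\widetilde{\sigma}^n(g_m)\,\delta^{n+m}$; $A$ is embedded as $\{f_0\delta^0\}$. *)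

theory Defs
  imports Complex_Main
begin

definition Cfun :: "('a::topological_space \<Rightarrow> complex) set" where
  "Cfun = {f. continuous_on UNIV f}"

definition int_pow :: "('a \<Rightarrow> 'a) \<Rightarrow> int \<Rightarrow> 'a \<Rightarrow> 'a" where
  "int_pow \<sigma> n = (if n \<ge> 0 then \<sigma> ^^ nat n else (inv \<sigma>) ^^ nat (- n))"

definition sigt_pow :: "('a \<Rightarrow> 'a) \<Rightarrow> int \<Rightarrow> ('a \<Rightarrow> complex) \<Rightarrow> ('a \<Rightarrow> complex)" where
  "sigt_pow \<sigma> n f = f \<circ> int_pow \<sigma> (- n)"

definition subalgebra :: "('a::topological_space \<Rightarrow> complex) set \<Rightarrow> bool" where
  "subalgebra A \<longleftrightarrow> A \<subseteq> Cfun \<and> (\<lambda>x. 0) \<in> A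
     \<and> (\<forall>f\<in>A. \<forall>g\<in>A. (\<lambda>x. f x + g x) \<in> A)
     \<and> (\<forall>c::complex. \<forall>f\<in>A. (\<lambda>x. c * f x) \<in> A)
     \<and> (\<forall>f\<in>A. \<forall>g\<in>A. (\<lambda>x. f x * g x) \<in> A)"

definition separates_points :: "('a \<Rightarrow> complex) set \<Rightarrow> bool" where
  "separates_points A \<longleftrightarrow> (\<forall>x y. x \<noteq> y \<longrightarrow> (\<exists>f\<in>A. f x \<noteq> f y))"

definition domain_of_uniqueness :: "'a set \<Rightarrow> ('a \<Rightarrow> complex) set \<Rightarrow> bool" where
  "domain_of_uniqueness S A \<longleftrightarrow> S \<noteq> {} \<and>
     (\<forall>f\<in>A. (\<forall>x\<in>S. f x = 0) \<longrightarrow> (\<forall>x. f x = 0))"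

text \<open>Crossed product A x| Z: finitely supported functions Z -> A.\<close>
definition crossed_product :: "('a \<Rightarrow> complex) set \<Rightarrow> (int \<Rightarrow> 'a \<Rightarrow> complex) set" where
  "crossed_product A = {F. (\<forall>n. F n \<in> A) \<and> finite {n. F n \<noteq> (\<lambda>x. 0)}}"

text \<open>Multiplication: (sum F_n d^n)(sum G_m d^m) = sum_{n,m} F_n sigt^n(G_m) d^(n+m).\<close>
definition cp_mult :: "('a \<Rightarrow> 'a) \<Rightarrow> (int \<Rightarrow> 'a \<Rightarrow> complex) \<Rightarrow> (int \<Rightarrow> 'a \<Rightarrow> complex)
     \<Rightarrow> (int \<Rightarrow> 'a \<Rightarrow> complex)" where
  "cp_mult \<sigma> F G = (\<lambda>k x. \<Sum>n\<in>{n. F n \<noteq> (\<lambda>x. 0)}. F n x * sigt_pow \<sigma> n (G (k - n)) x)"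

definition cp_embed :: "('a \<Rightarrow> complex) \<Rightarrow> (int \<Rightarrow> 'a \<Rightarrow> complex)" where
  "cp_embed f = (\<lambda>n. if n = 0 then f else (\<lambda>x. 0))"

text \<open>A (embedded) is maximal abelian in the crossed product: it is commutative and
  coincides with its commutant (equivalently, no strictly larger commutative subalgebra).\<close>
definition maximal_abelian_in_cp :: "('a \<Rightarrow> 'a) \<Rightarrow> ('a \<Rightarrow> complex) set \<Rightarrow> bool" where
  "maximal_abelian_in_cp \<sigma> A \<longleftrightarrow>
     (\<forall>f\<in>A. \<forall>g\<in>A. cp_mult \<sigma> (cp_embed f) (cp_embed g) = cp_mult \<sigma> (cp_embed g) (cp_embed f))
   \<and> (\<forall>F\<in>crossed_product A.
        (\<forall>f\<in>A. cp_mult \<sigma> F (cp_embed f) = cp_mult \<sigma> (cp_embed f) F)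
        \<longrightarrow> (\<exists>g\<in>A. F = cp_embed g))"

end

theory Submission
  imports Defs
begin

lemma invpow_cancel:
  fixes s :: "'a \<Rightarrow> 'a"
  assumes "bij s"
  shows "(inv s ^^ n) \<circ> (s ^^ n) = id"
proof (induction n)
  case 0 then show ?case by (simp add: fun_eq_iff funpow_0)
next
  case (Suc n)
  have "inv s \<circ> s = id" using assms by (simp add: bij_is_inj)
  have "(inv s ^^ Suc n) \<circ> (s ^^ Suc n) = (inv s ^^ n) \<circ> (inv s \<circ> s) \<circ> (s ^^ n)"
  proof -
    have a: "inv s ^^ Suc n = inv s ^^ n \<circ> inv s" by (rule funpow_Suc_right)
    have b: "s ^^ Suc n = s \<circ> s ^^ n" by simp
    have c: "\<And>x. inv s (s x) = x" using assms by (simp add: bij_is_inj)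
    show ?thesis unfolding a b using Suc.IH c by (simp add: fun_eq_iff)
  qed
  also have "\<dots> = id" using Suc.IH \<open>inv s \<circ> s = id\<close> by (simp add: fun_eq_iff)
  finally show ?case .
qed

lemma int_pow_neg_id:
  assumes "bij s" "int_pow s n = id"
  shows "int_pow s (-n) = id"
proof (cases "n \<ge> 0")
  case True
  then have "s ^^ nat n = id" using assms(2) by (simp add: int_pow_def)
  then have "inv s ^^ nat n = id" using invpow_cancel[OF assms(1), of "nat n"] by simp
  then show ?thesis using True by (simp add: int_pow_def)
next
  case False
  then have h: "inv s ^^ nat (-n) = id" using assms(2) by (simp add: int_pow_def)
  have "bij (inv s)" using assms(1) by (simp add: bij_imp_bij_inv)
  have "inv (inv s) = s" using assms(1) by (simp add: bij_is_surj surj_imp_inv_eq bij_is_inj inv_inv_eq)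
  then have "s ^^ nat (-n) = id" using invpow_cancel[OF \<open>bij (inv s)\<close>, of "nat (-n)"] h by simp
  then show ?thesis using False by (simp add: int_pow_def)
qed

lemma ip_neg: "int_pow s (- int m) = inv s ^^ m"
  by (cases "m = 0") (auto simp: int_pow_def)

lemma ip_pos: "int_pow s (int m) = s ^^ m"
  by (simp add: int_pow_def)

lemma sigt_app: "sigt_pow s n f x = f (int_pow s (-n) x)"
  by (simp add: sigt_pow_def)

lemma sigt_zero: "sigt_pow s n (\<lambda>x. 0) = (\<lambda>x. 0)"
  by (simp add: sigt_pow_def o_def)

lemma cm_left:
  assumes "finite {n. F n \<noteq> (\<lambda>x. 0)}"
  shows "cp_mult s F (cp_embed f) k x = F k x * sigt_pow s k f x"
proof -
  let ?S = "{n. F n \<noteq> (\<lambda>x. 0)}"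
  have "cp_mult s F (cp_embed f) k x = (\<Sum>n\<in>?S. if n = k then F k x * sigt_pow s k f x else 0)"
    unfolding cp_mult_def cp_embed_def by (rule sum.cong) (auto simp: sigt_zero)
  also have "\<dots> = (if k \<in> ?S then F k x * sigt_pow s k f x else 0)"
    using assms by (simp add: sum.delta')
  also have "\<dots> = F k x * sigt_pow s k f x" by auto
  finally show ?thesis .
qed

lemma cm_right:
  "cp_mult s (cp_embed f) F k x = f x * F k x"
proof (cases "f = (\<lambda>x. 0)")
  case True
  then have "{n. cp_embed f n \<noteq> (\<lambda>x. 0)} = {}" by (auto simp: cp_embed_def)
  then show ?thesis using True by (simp add: cp_mult_def)
next
  case False
  then have "{n. cp_embed f n \<noteq> (\<lambda>x. 0)} = {0}" by (auto simp: cp_embed_def)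
  then show ?thesis by (simp add: cp_mult_def cp_embed_def sigt_pow_def int_pow_def)
qed

lemma sigt_closed:
  assumes "\<forall>f\<in>A. sigt_pow s 1 f \<in> A" "\<forall>f\<in>A. sigt_pow s (-1) f \<in> A" "f \<in> A"
  shows "sigt_pow s k f \<in> A"
proof -
  have p: "sigt_pow s (int m) f \<in> A" for m
  proof (induction m)
    case 0 then show ?case using assms(3) by (simp add: sigt_pow_def int_pow_def)
  next
    case (Suc m)
    have e1: "int_pow s (-1) = inv s" by (simp add: int_pow_def)
    have "sigt_pow s (int (Suc m)) f = sigt_pow s 1 (sigt_pow s (int m) f)"
      unfolding sigt_pow_def ip_neg e1 funpow_Suc_right by (simp only: o_assoc)
    then show ?case using Suc assms(1) by simp
  qed
  have q: "sigt_pow s (- int m) f \<in> A" for m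
  proof (induction m)
    case 0 then show ?case using assms(3) by (simp add: sigt_pow_def int_pow_def)
  next
    case (Suc m)
    have e1: "int_pow s 1 = s" by (simp add: int_pow_def)
    have "sigt_pow s (- int (Suc m)) f = sigt_pow s (-1) (sigt_pow s (- int m) f)"
      unfolding sigt_pow_def minus_minus ip_pos e1 funpow_Suc_right by (simp only: o_assoc)
    then show ?case using Suc assms(2) by simp
  qed
  show ?thesis
  proof (cases "k \<ge> 0")
    case True then show ?thesis using p[of "nat k"] by simp
  next
    case False then show ?thesis using q[of "nat (-k)"] by simp
  qed
qed

theorem theorem3p11:
  fixes \<sigma> :: "'a::topological_space \<Rightarrow> 'a"
    and A :: "('a \<Rightarrow> complex) set"
  assumes "bij \<sigma>" and "continuous_on UNIV \<sigma>" and "continuous_on UNIV (inv \<sigma>)"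
    and "subalgebra A"
    and "\<exists>f\<in>A. f \<noteq> (\<lambda>x. 0)"
    and "\<forall>f\<in>A. sigt_pow \<sigma> 1 f \<in> A"
    and "\<forall>f\<in>A. sigt_pow \<sigma> (-1) f \<in> A"
    and "separates_points A"
    and "\<forall>U. open U \<and> U \<noteq> {} \<longrightarrow> domain_of_uniqueness U A"
  shows "maximal_abelian_in_cp \<sigma> A \<longleftrightarrow> (\<forall>n::int. n \<noteq> 0 \<longrightarrow> int_pow \<sigma> n \<noteq> id)"
proof
  assume M: "maximal_abelian_in_cp \<sigma> A"
  show "\<forall>n::int. n \<noteq> 0 \<longrightarrow> int_pow \<sigma> n \<noteq> id"
  proof (intro allI impI notI)
    fix n :: int assume n0: "n \<noteq> 0" and idn: "int_pow \<sigma> n = id"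
    obtain f where f: "f \<in> A" "f \<noteq> (\<lambda>x. 0)" using assms(5) by blast
    have z: "(\<lambda>x. 0) \<in> A" using assms(4) by (simp add: subalgebra_def)
    define F where "F = (\<lambda>k. if k = n then f else (\<lambda>x. 0::complex))"
    have fin: "finite {k. F k \<noteq> (\<lambda>x. 0)}"
      by (rule finite_subset[of _ "{n}"]) (auto simp: F_def)
    have FC: "F \<in> crossed_product A" using fin f z by (auto simp: crossed_product_def F_def)
    have idm: "int_pow \<sigma> (-n) = id" using int_pow_neg_id[OF assms(1) idn] .
    have comm: "\<forall>g\<in>A. cp_mult \<sigma> F (cp_embed g) = cp_mult \<sigma> (cp_embed g) F"
    proof (intro ballI ext)
      fix g k x
      show "cp_mult \<sigma> F (cp_embed g) k x = cp_mult \<sigma> (cp_embed g) F k x"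
        unfolding cm_left[OF fin] cm_right using idm by (simp add: sigt_app F_def)
    qed
    then obtain g where "F = cp_embed g" using M comm unfolding maximal_abelian_in_cp_def by (elim conjE) (drule bspec[OF _ FC], simp, blast)
    then have "F n = (\<lambda>x. 0)" using n0 by (simp add: cp_embed_def)
    then show False using f(2) by (simp add: F_def)
  qed
next
  assume NF: "\<forall>n::int. n \<noteq> 0 \<longrightarrow> int_pow \<sigma> n \<noteq> id"
  show "maximal_abelian_in_cp \<sigma> A"
    unfolding maximal_abelian_in_cp_def
  proof (intro conjI ballI impI)
    fix f g assume "f \<in> A" "g \<in> A"
    have "cp_embed g k x = (if k = 0 then g x else 0)" for k x by (simp add: cp_embed_def)
    have fin: "finite {n. cp_embed g n \<noteq> (\<lambda>x. 0)}"
      by (rule finite_subset[of _ "{0}"]) (auto simp: cp_embed_def)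
    show "cp_mult \<sigma> (cp_embed f) (cp_embed g) = cp_mult \<sigma> (cp_embed g) (cp_embed f)"
      by (intro ext) (simp only: cm_right, simp add: cp_embed_def)
  next
    fix F assume FC: "F \<in> crossed_product A"
      and comm: "\<forall>f\<in>A. cp_mult \<sigma> F (cp_embed f) = cp_mult \<sigma> (cp_embed f) F"
    have fin: "finite {n. F n \<noteq> (\<lambda>x. 0)}" and FA: "\<And>n. F n \<in> A"
      using FC by (auto simp: crossed_product_def)
    have key: "F k x * f (int_pow \<sigma> (-k) x) = f x * F k x" if "f \<in> A" for f k x
      using fun_cong[OF fun_cong[OF comm[rule_format, OF that], of k], of x]
      by (simp add: cm_left[OF fin] cm_right sigt_app)
    have Fk0: "F k = (\<lambda>x. 0)" if "k \<noteq> 0" for k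
    proof (rule ccontr)
      assume "F k \<noteq> (\<lambda>x. 0)"
      then obtain x0 where x0: "F k x0 \<noteq> 0" by auto
      define U where "U = {x. F k x \<noteq> 0}"
      have "continuous_on UNIV (F k)" using FA[of k] assms(4) by (auto simp: subalgebra_def Cfun_def)
      then have oU: "open U" unfolding U_def
        using open_Collect_neq[of "F k" "\<lambda>x. 0"] by (simp add: continuous_on_eq_continuous_at)
      have neU: "U \<noteq> {}" using x0 U_def by auto
      have fixU: "int_pow \<sigma> (-k) x = x" if "x \<in> U" for x
      proof (rule ccontr)
        assume "int_pow \<sigma> (-k) x \<noteq> x"
        then obtain f where "f \<in> A" "f (int_pow \<sigma> (-k) x) \<noteq> f x"
          using assms(8) unfolding separates_points_def by blast
        with key[OF this(1), of k x] that show False by (simp add: U_def mult.commute)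
      qed
      have allfix: "int_pow \<sigma> (-k) y = y" for y
      proof (rule ccontr)
        assume "int_pow \<sigma> (-k) y \<noteq> y"
        then obtain f where fA: "f \<in> A" and fy: "f (int_pow \<sigma> (-k) y) \<noteq> f y"
          using assms(8) unfolding separates_points_def by blast
        have sA: "sigt_pow \<sigma> k f \<in> A" using sigt_closed[OF assms(6,7) fA] .
        have "\<forall>c::complex. \<forall>f\<in>A. (\<lambda>x. c * f x) \<in> A" using assms(4) unfolding subalgebra_def by (elim conjE)
        from bspec[OF spec[OF this, of "-1"] fA] have mA: "(\<lambda>x. (-1) * f x) \<in> A" by simp
        have hA: "(\<lambda>x. sigt_pow \<sigma> k f x + (-1) * f x) \<in> A"
        proof -
          have "\<forall>f\<in>A. \<forall>g\<in>A. (\<lambda>x. f x + g x) \<in> A" using assms(4) unfolding subalgebra_def by (elim conjE)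
          from bspec[OF bspec[OF this sA] mA] show ?thesis by simp
        qed
        have "\<forall>x\<in>U. sigt_pow \<sigma> k f x + (-1) * f x = 0" using fixU by (simp add: sigt_app)
        then have "\<forall>x. sigt_pow \<sigma> k f x + (-1) * f x = 0"
        proof -
          have "domain_of_uniqueness U A" using assms(9) oU neU by blast
          then show ?thesis using hA \<open>\<forall>x\<in>U. sigt_pow \<sigma> k f x + (-1) * f x = 0\<close>
            unfolding domain_of_uniqueness_def by (elim conjE) (drule bspec[OF _ hA], simp)
        qed
        then have "sigt_pow \<sigma> k f y + (-1) * f y = 0" by blast
        then show False using fy by (simp add: sigt_app)
      qed
      have "int_pow \<sigma> (-k) = id" using allfix by auto
      then show False using NF that by simp
    qed
    show "\<exists>g\<in>A. F = cp_embed g"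
      using FA[of 0] Fk0 by (intro bexI[of _ "F 0"]) (auto simp: cp_embed_def)
  qed
qed

end
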